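(* Let $\mathscr D:\mathscr N=\mathscr N_1\cup\cdots\cup\mathscr N_k$ be a pairwise binary-sized decomposition of a chemical reaction network $\mathscr N$ with set of common complexes $\mathscr C_{\mathscr D}$. If $y'-x_1-\cdots-x_q-y''$ is a path in $\mathscr N$ such that $y',y''\in\mathscr C_{\mathscr D}$ while $x_1,\dots,x_q\notin\mathscr C_{\mathscr D}$, then there is a subnetwork $\mathscr N_i$ in which $y'$ and $y''$ are connected.
   Context: A CRN $\mathscr N=(\mathscr S,\mathscr C,\mathscr R)$ is viewed as a directed graph with vertex set the complexes $\mathscr C$ and arcs the reactions $\mathscr R$. A path is a path in the underlying undirected graph (consecutive complexes joined by a reaction in either direction); two complexes are connected in a network if a path in that network joins them. A decomposition $\mathscr N=\mathscr N_1\cup\cdots\cup\mathscr N_k$ is given by a partition $\{\mathscr R_1,\dots,\mathscr R_k\}$ of $\mathscr R$, $k\ge2$; the subnetwork $\mathscr N_i$ has reaction set $\mathscr R_i$ and complex set $\mathscr C_i$ consisting of the complexes occurring in reactions of $\mathscr R_i$. The set $\mathscr C_{\mathscr D}$ of common complexes consists of all complexes lying in the complex sets of at least two distinct subnetworks; $d=|\mathscr C_{\mathscr D}|$. The decomposition is pairwise binary-sized (PBS) if there are integers $0\le b\le c\le d$ such that $|\mathscr C_i\cap\mathscr C_j|\in\{b,c\}$ for all $i\neq j$. *)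

theory Defs
  imports Main
begin

text \<open>A CRN is represented by its (finite) set of reactions R, each reaction being a
pair (reactant complex, product complex).\<close>

definition complexes_of :: "('c \<times> 'c) set \<Rightarrow> 'c set" where
  "complexes_of R = fst ` R \<union> snd ` R"

definition adj :: "('c \<times> 'c) set \<Rightarrow> 'c \<Rightarrow> 'c \<Rightarrow> bool" where
  "adj R a b \<longleftrightarrow> (a, b) \<in> R \<or> (b, a) \<in> R"

definition is_path :: "('c \<times> 'c) set \<Rightarrow> 'c list \<Rightarrow> bool" where
  "is_path R xs \<longleftrightarrow> xs \<noteq> [] \<and> set xs \<subseteq> complexes_of R \<and>
     (\<forall>i. Suc i < length xs \<longrightarrow> adj R (xs ! i) (xs ! Suc i))"

definition connected_in :: "('c \<times> 'c) set \<Rightarrow> 'c \<Rightarrow> 'c \<Rightarrow> bool" where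
  "connected_in R a b \<longleftrightarrow> (\<exists>xs. is_path R xs \<and> hd xs = a \<and> last xs = b)"

definition is_decomposition :: "('c \<times> 'c) set \<Rightarrow> nat \<Rightarrow> (nat \<Rightarrow> ('c \<times> 'c) set) \<Rightarrow> bool" where
  "is_decomposition R k Rs \<longleftrightarrow> k \<ge> 2 \<and>
     (\<forall>i\<in>{1..k}. Rs i \<noteq> {}) \<and>
     (\<forall>i\<in>{1..k}. \<forall>j\<in>{1..k}. i \<noteq> j \<longrightarrow> Rs i \<inter> Rs j = {}) \<and>
     (\<Union>i\<in>{1..k}. Rs i) = R"

definition common_complexes :: "nat \<Rightarrow> (nat \<Rightarrow> ('c \<times> 'c) set) \<Rightarrow> 'c set" where
  "common_complexes k Rs = {y. \<exists>i\<in>{1..k}. \<exists>j\<in>{1..k}. i \<noteq> j \<and>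
       y \<in> complexes_of (Rs i) \<and> y \<in> complexes_of (Rs j)}"

definition is_PBS :: "nat \<Rightarrow> (nat \<Rightarrow> ('c \<times> 'c) set) \<Rightarrow> bool" where
  "is_PBS k Rs \<longleftrightarrow> (\<exists>b c::nat. b \<le> c \<and> c \<le> card (common_complexes k Rs) \<and>
     (\<forall>i\<in>{1..k}. \<forall>j\<in>{1..k}. i \<noteq> j \<longrightarrow>
        card (complexes_of (Rs i) \<inter> complexes_of (Rs j)) \<in> {b, c}))"

end

theory Submission
  imports Defs
begin

lemma adj_cx: "adj S a b \<Longrightarrow> a \<in> complexes_of S \<and> b \<in> complexes_of S"
  unfolding adj_def complexes_of_def by (auto intro: rev_image_eqI)

lemma adj_split:
  assumes "is_decomposition R k Rs" "adj R a b"
  shows "\<exists>i\<in>{1..k}. adj (Rs i) a b"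
  using assms unfolding is_decomposition_def adj_def by blast

lemma main:
  assumes dec: "is_decomposition R k Rs"
    and p: "is_path R L" and len: "length L \<ge> 2"
    and inner: "\<And>m. 0 < m \<Longrightarrow> Suc m < length L \<Longrightarrow> L ! m \<notin> common_complexes k Rs"
  shows "\<exists>i\<in>{1..k}. is_path (Rs i) L"
proof -
  have e: "\<And>m. Suc m < length L \<Longrightarrow> \<exists>i\<in>{1..k}. adj (Rs i) (L!m) (L!Suc m)"
    using p adj_split[OF dec] unfolding is_path_def by blast
  obtain i0 where i0: "i0 \<in> {1..k}" "adj (Rs i0) (L!0) (L!Suc 0)"
    using e[of 0] len by auto
  have all: "Suc m < length L \<Longrightarrow> adj (Rs i0) (L!m) (L!Suc m)" for m
  proof (induction m)
    case 0 then show ?case using i0 by simp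
  next
    case (Suc m)
    then have IH: "adj (Rs i0) (L!m) (L!Suc m)" by simp
    obtain j where j: "j \<in> {1..k}" "adj (Rs j) (L!Suc m) (L!Suc (Suc m))"
      using e[of "Suc m"] Suc.prems by auto
    show ?case
    proof (cases "j = i0")
      case True then show ?thesis using j by simp
    next
      case False
      have "L ! Suc m \<in> common_complexes k Rs"
        unfolding common_complexes_def
        using i0(1) j(1) False adj_cx[OF IH] adj_cx[OF j(2)] by blast
      moreover have "L ! Suc m \<notin> common_complexes k Rs"
        using inner[of "Suc m"] Suc.prems by simp
      ultimately show ?thesis by blast
    qed
  qed
  have "set L \<subseteq> complexes_of (Rs i0)"
  proof
    fix x assume "x \<in> set L"
    then obtain m where m: "m < length L" "x = L ! m" by (auto simp: in_set_conv_nth)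
    show "x \<in> complexes_of (Rs i0)"
    proof (cases "Suc m < length L")
      case True then show ?thesis using adj_cx[OF all[OF True]] m by simp
    next
      case False
      then obtain n where n: "m = Suc n" using len m(1)
        by (cases m) auto
      then show ?thesis using adj_cx[OF all[of n]] m by simp
    qed
  qed
  then have "is_path (Rs i0) L" using p all unfolding is_path_def by blast
  then show ?thesis using i0 by blast
qed

theorem lemma1:
  fixes R :: "('c \<times> 'c) set" and k :: nat and Rs :: "nat \<Rightarrow> ('c \<times> 'c) set"
    and y' y'' :: 'c and xs :: "'c list"
  assumes "finite R"
    and "is_decomposition R k Rs"
    and "is_PBS k Rs"
    and "is_path R (y' # xs @ [y''])"
    and "y' \<in> common_complexes k Rs" and "y'' \<in> common_complexes k Rs"
    and "\<forall>x\<in>set xs. x \<notin> common_complexes k Rs"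
  shows "\<exists>i\<in>{1..k}. connected_in (Rs i) y' y''"
proof -
  let ?L = "y' # xs @ [y'']"
  have inner: "?L ! m \<notin> common_complexes k Rs" if h1: "0 < m" and h2: "Suc m < length ?L" for m
  proof -
    obtain n where n: "m = Suc n" using h1 by (cases m) auto
    have "n < length xs" using h2 n by simp
    then have "?L ! m \<in> set xs" using n by (simp add: nth_append)
    then show ?thesis using assms(7) by blast
  qed
  obtain i where "i \<in> {1..k}" "is_path (Rs i) ?L"
    using main[OF assms(2) assms(4)] inner by fastforce
  then show ?thesis unfolding connected_in_def by force
qed

end
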